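(* An even nonnegative integer $n$ satisfies $v(n)=0$ if and only if $n=2^t-2$ or $n=2^t$ for some positive integer $t$.
   Context: A hyperbinary expansion of a nonnegative integer $n$ is a word $x_0\cdots x_k$ over $\{0,1,2\}$ with $x_0\ne0$ and $\sum_i x_i2^{k-i}=n$. The empty word is the unique hyperbinary expansion of $0$. Write $\mathcal H(n)$ for the set of such expansions and $b(n)=|\mathcal H(n)|$. $A(n)$ is the directed graph on $\mathcal H(n)$ with an arc from $\mathbf x02\mathbf y$ to $\mathbf x10\mathbf y$, from $2\mathbf y$ to $10\mathbf y$, and from $\mathbf x12\mathbf y$ to $\mathbf x20\mathbf y$, for arbitrary words $\mathbf x,\mathbf y$ whenever both endpoints lie in $\mathcal H(n)$. $A(n)$ is connected. $v(n)$ denotes the cyclomatic number of $A(n)$: (number of arcs) $-\,b(n)+1$. *)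

theory Defs
  imports Main
begin

text \<open>Value of a word x_0 ... x_k (most significant digit first): sum x_i 2^(k-i).\<close>
definition hval :: "nat list \<Rightarrow> nat" where
  "hval xs = foldl (\<lambda>a d. 2 * a + d) 0 xs"

definition hyperbinary :: "nat \<Rightarrow> nat list set" where
  "hyperbinary n = {xs. set xs \<subseteq> {0, 1, 2} \<and> (xs \<noteq> [] \<longrightarrow> hd xs \<noteq> 0) \<and> hval xs = n}"

definition b :: "nat \<Rightarrow> nat" where
  "b n = card (hyperbinary n)"

definition hmove :: "nat list \<Rightarrow> nat list \<Rightarrow> bool" where
  "hmove u w \<longleftrightarrow>
     (\<exists>x y. u = x @ [0, 2] @ y \<and> w = x @ [1, 0] @ y) \<or>
     (\<exists>y. u = 2 # y \<and> w = [1, 0] @ y) \<or>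
     (\<exists>x y. u = x @ [1, 2] @ y \<and> w = x @ [2, 0] @ y)"

definition arcsA :: "nat \<Rightarrow> (nat list \<times> nat list) set" where
  "arcsA n = {(u, w). u \<in> hyperbinary n \<and> w \<in> hyperbinary n \<and> hmove u w}"

definition v :: "nat \<Rightarrow> int" where
  "v n = int (card (arcsA n)) - int (b n) + 1"

end

theory Submission imports Defs begin

lemma foldl_hval: "foldl (\<lambda>a d. 2 * a + d) a ys = a * 2 ^ length ys + hval ys"
proof (induction ys arbitrary: a)
  case Nil then show ?case by (simp add: hval_def)
next
  case (Cons y ys)
  have "hval (y # ys) = y * 2 ^ length ys + hval ys"
    unfolding hval_def using Cons.IH[of y] by (simp add: hval_def)
  then show ?case using Cons.IH[of "2*a+y"] by (simp add: algebra_simps)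
qed

lemma hval_append: "hval (xs @ ys) = hval xs * 2 ^ length ys + hval ys"
proof -
  have "hval (xs @ ys) = foldl (\<lambda>a d. 2 * a + d) (hval xs) ys"
    unfolding hval_def by (rule foldl_append)
  also have "\<dots> = hval xs * 2 ^ length ys + hval ys" by (rule foldl_hval)
  finally show ?thesis .
qed

lemma hval_Nil[simp]: "hval [] = 0" by (simp add: hval_def)

lemma hval_single[simp]: "hval [d] = d" by (simp add: hval_def)

lemma hval_snoc[simp]: "hval (xs @ [d]) = 2 * hval xs + d"
  using hval_append[of xs "[d]"] by simp

lemma hval_Cons: "hval (a # ys) = a * 2 ^ length ys + hval ys"
  using hval_append[of "[a]" ys] by simp

definition valid :: "nat list \<Rightarrow> bool" where
  "valid xs \<longleftrightarrow> set xs \<subseteq> {0,1,2} \<and> (xs \<noteq> [] \<longrightarrow> hd xs \<noteq> 0)"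

lemma hyp_eq: "hyperbinary n = {xs. valid xs \<and> hval xs = n}"
  by (auto simp: hyperbinary_def valid_def)

lemma len_le_hval: "valid xs \<Longrightarrow> length xs \<le> hval xs"
proof (induction xs rule: rev_induct)
  case Nil then show ?case by simp
next
  case (snoc d x)
  show ?case
  proof (cases "x = []")
    case True then show ?thesis using snoc.prems by (simp add: valid_def)
  next
    case False
    then have "valid x" using snoc.prems by (auto simp: valid_def)
    with snoc.IH have "length x \<le> hval x" by simp
    moreover have "length x \<ge> 1" using False by (cases x) auto
    ultimately show ?thesis by simp
  qed
qed

lemma finite_hyp: "finite (hyperbinary n)"
proof -
  have "hyperbinary n \<subseteq> {xs. set xs \<subseteq> {0,1,2} \<and> length xs \<le> n}"
    using len_le_hval by (auto simp: hyp_eq valid_def)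
  moreover have "finite {xs. set xs \<subseteq> {0::nat,1,2} \<and> length xs \<le> n}"
    by (rule finite_lists_length_le) simp
  ultimately show ?thesis by (rule finite_subset)
qed

lemma valid_snoc: "valid (x @ [d]) \<longleftrightarrow> d \<in> {0,1,2} \<and> (x = [] \<longrightarrow> d \<noteq> 0) \<and> valid x"
  by (cases x) (auto simp: valid_def)

lemma hyp0: "xs \<in> hyperbinary 0 \<longleftrightarrow> xs = []"
proof
  assume a: "xs \<in> hyperbinary 0"
  show "xs = []"
  proof (rule ccontr)
    assume "xs \<noteq> []"
    then have "length xs \<ge> 1" by (cases xs) auto
    moreover have "valid xs" "hval xs = 0" using a by (auto simp: hyp_eq)
    ultimately show False using len_le_hval[of xs] by simp
  qed
qed (auto simp: hyp_eq valid_def)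

lemma hyp_pos: "u \<in> hyperbinary n \<Longrightarrow> n > 0 \<Longrightarrow>
   \<exists>x d. u = x @ [d] \<and> d \<in> {0,1,2} \<and> (x = [] \<longrightarrow> d \<noteq> 0) \<and> x \<in> hyperbinary (hval x) \<and> n = 2 * hval x + d"
  apply (cases u rule: rev_exhaust)
  apply (auto simp: hyp_eq valid_snoc)
  done

lemma hyp_snocI: "x \<in> hyperbinary m \<Longrightarrow> d \<in> {0,1,2} \<Longrightarrow> (x = [] \<longrightarrow> d \<noteq> 0) \<Longrightarrow> x @ [d] \<in> hyperbinary (2*m+d)"
  by (auto simp: hyp_eq valid_snoc)

lemma hmove_2: "hmove u w \<Longrightarrow> 2 \<in> set u"
  by (auto simp: hmove_def)

lemma hmove_Nil: "\<not> hmove [] w"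
  by (auto simp: hmove_def)

lemma hmove_lift: "hmove x w \<Longrightarrow> hmove (x @ [d]) (w @ [d])"
  unfolding hmove_def
  apply (elim disjE exE conjE)
    apply (rule disjI1, rule_tac x=xa in exI, rule_tac x="y@[d]" in exI, simp)
   apply (rule disjI2, rule disjI1, rule_tac x="y@[d]" in exI, simp)
  apply (rule disjI2, rule disjI2, rule_tac x=xa in exI, rule_tac x="y@[d]" in exI, simp)
  done

lemma hmove_end0: "hmove (x @ [0, 2]) (x @ [1, 0])"
  unfolding hmove_def by (rule disjI1, rule_tac x=x in exI, rule_tac x="[]" in exI, simp)

lemma hmove_end1: "hmove (x @ [1, 2]) (x @ [2, 0])"
  unfolding hmove_def by (rule disjI2, rule disjI2, rule_tac x=x in exI, rule_tac x="[]" in exI, simp)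

lemma hmove_snocD:
  assumes "hmove (x @ [d]) w"
  shows "(\<exists>w'. w = w' @ [d] \<and> hmove x w') \<or>
    (d = 2 \<and> ((x = [] \<and> w = [1,0]) \<or> (\<exists>x'. x = x' @ [0] \<and> w = x' @ [1,0]) \<or> (\<exists>x'. x = x' @ [1] \<and> w = x' @ [2,0])))"
proof -
  from assms[unfolded hmove_def] show ?thesis
proof (elim disjE exE conjE)
  fix a y assume u: "x @ [d] = a @ [0, 2] @ y" and w: "w = a @ [1, 0] @ y"
  show ?thesis
  proof (cases y rule: rev_exhaust)
    case Nil then show ?thesis using u w by auto
  next
    case (snoc y' e)
    then show ?thesis using u w
      by (rule_tac disjI1, rule_tac x="a @ [1,0] @ y'" in exI, auto simp: hmove_def)
  qed
next
  fix y assume u: "x @ [d] = 2 # y" and w: "w = [1, 0] @ y"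
  show ?thesis
  proof (cases y rule: rev_exhaust)
    case Nil then show ?thesis using u w by auto
  next
    case (snoc y' e)
    then show ?thesis using u w
      by (rule_tac disjI1, rule_tac x="[1,0] @ y'" in exI, auto simp: hmove_def)
  qed
next
  fix a y assume u: "x @ [d] = a @ [1, 2] @ y" and w: "w = a @ [2, 0] @ y"
  show ?thesis
  proof (cases y rule: rev_exhaust)
    case Nil then show ?thesis using u w by auto
  next
    case (snoc y' e)
    then show ?thesis using u w
      by (rule_tac disjI1, rule_tac x="a @ [2,0] @ y'" in exI, auto simp: hmove_def)
  qed
qed
qed

lemma hmove_exists: "set u \<subseteq> {0,1,2} \<Longrightarrow> 2 \<in> set u \<Longrightarrow> \<exists>w. hmove u w"
proof (induction u rule: rev_induct)
  case Nil then show ?case by simp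
next
  case (snoc d x)
  show ?case
  proof (cases "2 \<in> set x")
    case True
    with snoc obtain w where "hmove x w" by auto
    then show ?thesis using hmove_lift by blast
  next
    case False
    then have d: "d = 2" using snoc.prems by auto
    show ?thesis
    proof (cases x rule: rev_exhaust)
      case Nil then show ?thesis using d by (auto simp: hmove_def)
    next
      case (snoc x' e)
      then have "e = 0 \<or> e = 1" using False snoc.prems \<open>x = x' @ [e]\<close> by auto
      then show ?thesis using d snoc hmove_end0 hmove_end1 by auto
    qed
  qed
qed

lemma hmove_hval: "hmove u w \<Longrightarrow> hval w = hval u"
  by (auto simp: hmove_def hval_append hval_Cons)

lemma hmove_valid: "hmove u w \<Longrightarrow> valid u \<Longrightarrow> valid w"
  unfolding hmove_def valid_def
  by (auto simp: hd_append split: if_splits)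


definition bad :: "nat list \<Rightarrow> bool" where
  "bad u \<longleftrightarrow> (\<exists>w1 w2. w1 \<noteq> w2 \<and> hmove u w1 \<and> hmove u w2)"

definition BadN :: "nat \<Rightarrow> bool" where
  "BadN n \<longleftrightarrow> (\<exists>u\<in>hyperbinary n. bad u)"

definition Has2N :: "nat \<Rightarrow> bool" where
  "Has2N n \<longleftrightarrow> (\<exists>u\<in>hyperbinary n. 2 \<in> set u)"

lemma bin_unique: "valid x \<Longrightarrow> valid y \<Longrightarrow> 2 \<notin> set x \<Longrightarrow> 2 \<notin> set y \<Longrightarrow> hval x = hval y \<Longrightarrow> x = y"
proof (induction x arbitrary: y rule: rev_induct)
  case Nil
  then have "y \<in> hyperbinary 0" by (simp add: hyp_eq)
  then show ?case using hyp0 by simp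
next
  case (snoc d x)
  have "x @ [d] \<noteq> []" by simp
  then have "y \<noteq> []" using snoc.prems hyp0[of "x @ [d]"] by (auto simp: hyp_eq)
  then obtain y' e where y: "y = y' @ [e]" by (cases y rule: rev_exhaust) auto
  have de: "d \<in> {0,1}" "e \<in> {0,1}" using snoc.prems y by (auto simp: valid_def)
  have "2 * hval x + d = 2 * hval y' + e" using snoc.prems y by simp
  then have "d = e" using de by (auto; presburger)
  then have "d = e" "hval x = hval y'" using \<open>2 * hval x + d = 2 * hval y' + e\<close> by auto
  moreover have "valid x" "valid y'" using snoc.prems y by (auto simp: valid_snoc)
  moreover have "2 \<notin> set x" "2 \<notin> set y'" using snoc.prems y by auto
  ultimately have "x = y'" using snoc.IH[of y'] by blast
  then show ?case using y \<open>d = e\<close> by simp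
qed

lemma bin_exists: "\<exists>x. x \<in> hyperbinary n \<and> 2 \<notin> set x"
proof (induction n rule: less_induct)
  case (less n)
  show ?case
  proof (cases "n = 0")
    case True then show ?thesis by (auto simp: hyp0)
  next
    case False
    then obtain x where x: "x \<in> hyperbinary (n div 2)" "2 \<notin> set x" using less[of "n div 2"] False by auto
    have "x = [] \<longrightarrow> n div 2 = 0" using x by (auto simp: hyp_eq)
    then have "x = [] \<longrightarrow> n mod 2 \<noteq> 0" using False div_mult_mod_eq[of n 2] by auto
    then have "x @ [n mod 2] \<in> hyperbinary (2 * (n div 2) + n mod 2)"
      using x by (intro hyp_snocI) auto
    moreover have "2 \<notin> set (x @ [n mod 2])" using x by auto
    ultimately show ?thesis by auto
  qed
qed

lemma arcs_eq: "arcsA n = {(u, w). u \<in> hyperbinary n \<and> hmove u w}"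
  unfolding arcsA_def using hmove_hval hmove_valid by (auto simp: hyp_eq)

lemma v_zero_iff: "v n = 0 \<longleftrightarrow> \<not> BadN n"
proof -
  define H where "H = hyperbinary n"
  define Y where "Y = {u \<in> H. 2 \<in> set u}"
  define A where "A = arcsA n"
  have fH: "finite H" using finite_hyp H_def by simp
  have fA: "finite A"
  proof -
    have "A \<subseteq> H \<times> H" unfolding A_def arcsA_def H_def by auto
    then show ?thesis using fH finite_subset by blast
  qed
  have img: "fst ` A = Y"
  proof
    show "fst ` A \<subseteq> Y" unfolding A_def Y_def H_def arcs_eq using hmove_2 by auto
    show "Y \<subseteq> fst ` A"
    proof
      fix u assume "u \<in> Y"
      then have u: "u \<in> H" "2 \<in> set u" unfolding Y_def by auto
      then have "set u \<subseteq> {0,1,2}" unfolding H_def by (auto simp: hyp_eq valid_def)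
      then obtain w where "hmove u w" using hmove_exists u by blast
      then have "(u, w) \<in> A" using u unfolding A_def arcs_eq H_def by auto
      then show "u \<in> fst ` A" by force
    qed
  qed
  obtain x0 where x0: "x0 \<in> H" "2 \<notin> set x0" using bin_exists H_def by blast
  have N: "{u \<in> H. 2 \<notin> set u} = {x0}"
    using x0 bin_unique unfolding H_def by (auto simp: hyp_eq)
  have "H = insert x0 Y" "x0 \<notin> Y" using N x0 unfolding Y_def by auto
  moreover have "finite Y" using fH unfolding Y_def by simp
  ultimately have "card H = card Y + 1" by simp
  then have vv: "v n = int (card A) - int (card Y)"
    unfolding v_def b_def A_def H_def by simp
  have "v n = 0 \<longleftrightarrow> card (fst ` A) = card A" using vv img by auto
  also have "\<dots> \<longleftrightarrow> inj_on fst A"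
    using fA card_image eq_card_imp_inj_on by metis
  also have "\<dots> \<longleftrightarrow> \<not> BadN n"
  proof
    assume inj: "inj_on fst A"
    show "\<not> BadN n"
    proof
      assume "BadN n"
      then obtain u w1 w2 where "u \<in> H" "w1 \<noteq> w2" "hmove u w1" "hmove u w2"
        unfolding BadN_def bad_def H_def by blast
      then have "(u,w1) \<in> A" "(u,w2) \<in> A" "(u,w1) \<noteq> (u,w2)" unfolding A_def arcs_eq H_def by auto
      then show False using inj unfolding inj_on_def by fastforce
    qed
  next
    assume nb: "\<not> BadN n"
    show "inj_on fst A"
    proof (rule inj_onI)
      fix p q assume pA: "p \<in> A" and qA: "q \<in> A" and eq: "fst p = fst q"
      obtain u w1 where p: "p = (u, w1)" by (cases p)
      obtain u' w2 where q: "q = (u', w2)" by (cases q)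
      have uu: "u' = u" using eq p q by simp
      then have "u \<in> hyperbinary n" "hmove u w1" "hmove u w2" using pA qA p q unfolding A_def arcs_eq by auto
      then have "w1 = w2" using nb unfolding BadN_def bad_def by blast
      then show "p = q" using p q uu by simp
    qed
  qed
  finally show ?thesis .
qed


lemma hyp_split:
  assumes "u \<in> hyperbinary n" "n > 0"
  obtains x d where "u = x @ [d]" "d \<in> {0,1,2}" "x = [] \<longrightarrow> d \<noteq> 0"
    "x \<in> hyperbinary (hval x)" "n = 2 * hval x + d"
  using hyp_pos[OF assms] by blast

lemma T1: "\<not> Has2N (2 ^ j - 1)"
proof (induction j)
  case 0 then show ?case by (auto simp: Has2N_def hyp0)
next
  case (Suc j)
  show ?case
  proof
    assume "Has2N (2 ^ Suc j - 1)"
    then obtain u where u: "u \<in> hyperbinary (2 ^ Suc j - 1)" "2 \<in> set u" unfolding Has2N_def by blast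
    have pos: "(2::nat) ^ Suc j - 1 > 0" using one_less_power[of "2::nat" "Suc j"] by linarith
    obtain x d where xd: "u = x @ [d]" "d \<in> {0,1,2}" "x \<in> hyperbinary (hval x)"
      "2 ^ Suc j - 1 = 2 * hval x + d" using hyp_split[OF u(1) pos] by blast
    have p: "(2::nat) ^ Suc j = 2 * 2 ^ j" "(2::nat) ^ j \<ge> 1" by simp_all
    obtain P where P: "P = (2::nat) ^ j" by simp
    have "P \<ge> 1" using P by simp
    moreover have "2 * P - 1 = 2 * hval x + d" using xd(4) P by simp
    ultimately have "d = 1" "hval x = P - 1" using xd(2) by auto presburger+
    then have "d = 1" "hval x = 2 ^ j - 1" using P by auto
    then have "x \<in> hyperbinary (2 ^ j - 1)" "2 \<in> set x" using xd u(2) by auto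
    then show False using Suc.IH unfolding Has2N_def by blast
  qed
qed

lemma T2: "\<not> Has2N k \<Longrightarrow> \<exists>j. k + 1 = 2 ^ j"
proof (induction k rule: less_induct)
  case (less k)
  show ?case
  proof (cases "k = 0")
    case True then show ?thesis by (rule_tac x=0 in exI) simp
  next
    case False
    show ?thesis
    proof (cases "even k")
      case True
      then obtain m where m: "k = 2 * m" "m \<ge> 1" using False by (auto elim!: evenE)
      obtain x where x: "x \<in> hyperbinary (m - 1)" using bin_exists by blast
      have "x @ [2] \<in> hyperbinary (2 * (m - 1) + 2)" by (rule hyp_snocI[OF x]) auto
      moreover have "2 * (m - 1) + 2 = k" using m by simp
      ultimately have "Has2N k" unfolding Has2N_def by force
      then show ?thesis using less.prems by simp
    next
      case odd: False
      then obtain m where m: "k = 2 * m + 1" by (auto elim!: oddE)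
      have "\<not> Has2N m"
      proof
        assume "Has2N m"
        then obtain y where y: "y \<in> hyperbinary m" "2 \<in> set y" unfolding Has2N_def by blast
        have "y @ [1] \<in> hyperbinary (2 * m + 1)" by (rule hyp_snocI[OF y(1)]) auto
        then have "Has2N k" using y(2) m unfolding Has2N_def by (intro bexI[of _ "y @ [1]"]) auto
        then show False using less.prems by simp
      qed
      then obtain j where "m + 1 = 2 ^ j" using less.IH[of m] m by auto
      then have "k + 1 = 2 ^ Suc j" using m by simp
      then show ?thesis by blast
    qed
  qed
qed

lemma T3:
  assumes "m \<ge> 1" "Has2N ((m - 1) div 2)"
  shows "BadN (2 * m)"
proof -
  obtain y where y: "y \<in> hyperbinary ((m - 1) div 2)" "2 \<in> set y"
    using assms(2) unfolding Has2N_def by blast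
  define r where "r = (m - 1) mod 2"
  have r: "r \<in> {0,1}" unfolding r_def by auto
  have yne: "y \<noteq> []" using y by auto
  have "y @ [r] \<in> hyperbinary (2 * ((m - 1) div 2) + r)"
    by (rule hyp_snocI[OF y(1)]) (use r yne in auto)
  then have "y @ [r] \<in> hyperbinary (m - 1)" unfolding r_def by simp
  then have "(y @ [r]) @ [2] \<in> hyperbinary (2 * (m - 1) + 2)" by (rule hyp_snocI) auto
  moreover have "2 * (m - 1) + 2 = 2 * m" using assms(1) by simp
  ultimately have u: "y @ [r, 2] \<in> hyperbinary (2 * m)" by simp
  have "set y \<subseteq> {0,1,2}" using y by (auto simp: hyp_eq valid_def)
  then obtain w where "hmove y w" using hmove_exists y(2) by blast
  then have "hmove ((y @ [r]) @ [2]) ((w @ [r]) @ [2])" by (intro hmove_lift)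
  then have m1: "hmove (y @ [r, 2]) (w @ [r, 2])" by simp
  have m2: "hmove (y @ [r, 2]) (y @ [r + 1, 0])"
  proof (cases "r = 0")
    case True then show ?thesis using hmove_end0[of y] by simp
  next
    case False then have "r = 1" using r by auto
    then show ?thesis using hmove_end1[of y] by (metis one_add_one)
  qed
  have "w @ [r, 2] \<noteq> y @ [r + 1, 0]" by (metis last_snoc append_Cons append_Nil append_assoc zero_neq_numeral)
  then have "bad (y @ [r, 2])" unfolding bad_def using m1 m2 by blast
  then show ?thesis using u unfolding BadN_def by blast
qed

lemma T5: "\<not> Has2N k \<Longrightarrow> \<not> BadN k"
  unfolding Has2N_def BadN_def bad_def using hmove_2 by blast


lemma T4:
  assumes nb: "\<not> BadN m" and nb1: "m \<ge> 1 \<Longrightarrow> \<not> BadN (m - 1)"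
    and nh: "m \<ge> 1 \<Longrightarrow> \<not> Has2N ((m - 1) div 2)"
  shows "\<not> BadN (2 * m)"
proof
  assume "BadN (2 * m)"
  then obtain u w1 w2 where u: "u \<in> hyperbinary (2 * m)" "w1 \<noteq> w2" "hmove u w1" "hmove u w2"
    unfolding BadN_def bad_def by blast
  have mpos: "m > 0"
  proof (rule ccontr)
    assume "\<not> m > 0"
    then have "u = []" using u(1) hyp0 by simp
    then show False using u(3) hmove_Nil by simp
  qed
  then have "2 * m > 0" by simp
  from hyp_split[OF u(1) this] obtain x d where xd: "u = x @ [d]" "d \<in> {0,1,2}"
    "x \<in> hyperbinary (hval x)" "2 * m = 2 * hval x + d" by blast
  have "d = 0 \<or> d = 2" using xd(2,4) by auto presburger
  then show False
  proof
    assume d0: "d = 0"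
    then have hx: "hval x = m" using xd(4) by simp
    obtain w1' where "w1 = w1' @ [0]" "hmove x w1'" using hmove_snocD[of x d w1] u(3) xd(1) d0 by auto
    moreover obtain w2' where "w2 = w2' @ [0]" "hmove x w2'" using hmove_snocD[of x d w2] u(4) xd(1) d0 by auto
    ultimately have "bad x" using u(2) unfolding bad_def by blast
    then show False using nb xd(3) hx unfolding BadN_def by blast
  next
    assume d2: "d = 2"
    then have hx: "hval x = m - 1" using xd(4) by simp
    have m1: "m \<ge> 1" using mpos by simp
    have key: False if h1: "hmove x w'" and h2: "x = [] \<or> (\<exists>x'. x = x' @ [0]) \<or> (\<exists>x'. x = x' @ [1])" for w'
    proof -
      have x2: "2 \<in> set x" using hmove_2 h1 by blast
      then obtain x' e where xe: "x = x' @ [e]" "e \<in> {0,1}" using h2 by auto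
      have "2 \<in> set x'" using x2 xe by auto
      moreover have "valid x'" using xd(3) xe(1) by (auto simp: hyp_eq valid_snoc)
      moreover have "hval x' = (m - 1) div 2" using hx xe by auto
      ultimately have "Has2N ((m - 1) div 2)" unfolding Has2N_def hyp_eq by blast
      then show False using nh m1 by blast
    qed
    consider (L1) w1' where "w1 = w1' @ [2]" "hmove x w1'"
      | (E1) "x = [] \<and> w1 = [1,0] \<or> (\<exists>x'. x = x' @ [0] \<and> w1 = x' @ [1,0]) \<or> (\<exists>x'. x = x' @ [1] \<and> w1 = x' @ [2,0])"
      using hmove_snocD[of x 2 w1] u(3) xd(1) d2 by blast
    then show False
    proof cases
      case L1
      note l1 = this
      consider (L2) w2' where "w2 = w2' @ [2]" "hmove x w2'"
        | (E2) "x = [] \<and> w2 = [1,0] \<or> (\<exists>x'. x = x' @ [0] \<and> w2 = x' @ [1,0]) \<or> (\<exists>x'. x = x' @ [1] \<and> w2 = x' @ [2,0])"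
        using hmove_snocD[of x 2 w2] u(4) xd(1) d2 by blast
      then show False
      proof cases
        case L2
        then have "bad x" using l1 u(2) unfolding bad_def by blast
        then show False using nb1[OF m1] xd(3) hx unfolding BadN_def by auto
      next
        case E2
        then show False using key[OF l1(2)] by blast
      qed
    next
      case E1
      note e1 = this
      consider (L2) w2' where "w2 = w2' @ [2]" "hmove x w2'"
        | (E2) "x = [] \<and> w2 = [1,0] \<or> (\<exists>x'. x = x' @ [0] \<and> w2 = x' @ [1,0]) \<or> (\<exists>x'. x = x' @ [1] \<and> w2 = x' @ [2,0])"
        using hmove_snocD[of x 2 w2] u(4) xd(1) d2 by blast
      then show False
      proof cases
        case L2
        then show False using key[OF L2(2)] e1 by blast
      next
        case E2
        then show False using e1 u(2) by auto
      qed
    qed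
  qed
qed

lemma NT1:
  assumes "even n" "\<not> BadN n"
  shows "\<exists>t::nat. t > 0 \<and> (n = 2 ^ t - 2 \<or> n = 2 ^ t)"
proof -
  obtain m where m: "n = 2 * m" using assms(1) by (auto elim!: evenE)
  show ?thesis
  proof (cases "m = 0")
    case True then show ?thesis using m by (rule_tac x=1 in exI) simp
  next
    case False
    then have "\<not> Has2N ((m - 1) div 2)" using T3[of m] assms(2) m by auto
    then obtain j where j: "(m - 1) div 2 + 1 = 2 ^ j" using T2 by blast
    obtain P where P: "P = (2::nat) ^ j" by simp
    have "P \<ge> 1" using P by simp
    moreover have "(m - 1) div 2 + 1 = P" using j P by simp
    ultimately have "m = 2 * P - 1 \<or> m = 2 * P" using False by presburger
    moreover have "(2::nat) ^ (j + 2) = 4 * P" using P by simp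
    ultimately have "n = 2 ^ (j + 2) - 2 \<or> n = 2 ^ (j + 2)" using m \<open>P \<ge> 1\<close> by auto
    then show ?thesis by (rule_tac x="j+2" in exI) simp
  qed
qed

lemma NT2: "(\<exists>t::nat. t > 0 \<and> (n = 2 ^ t - 2 \<or> n = 2 ^ t)) \<Longrightarrow> \<not> BadN n"
proof (induction n rule: less_induct)
  case (less n)
  then obtain t where t: "t > 0" "n = 2 ^ t - 2 \<or> n = 2 ^ t" by blast
  obtain s where s: "t = Suc s" using t(1) by (cases t) auto
  obtain Q where Q: "Q = (2::nat) ^ s" by simp
  have Q1: "Q \<ge> 1" using Q by simp
  have nb0: "\<not> BadN (2 ^ k - 1)" for k using T1 T5 by blast
  from t(2) show ?case
  proof
    assume nA: "n = 2 ^ t - 2"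
    define m where "m = Q - 1"
    have nm: "n = 2 * m" using nA s Q Q1 unfolding m_def by simp
    show ?thesis unfolding nm
    proof (rule T4)
      show "\<not> BadN m" unfolding m_def Q using nb0 by simp
    next
      assume m1: "m \<ge> 1"
      then have "s \<noteq> 0" using Q unfolding m_def by (cases s) auto
      then obtain s' where s': "s = Suc s'" by (cases s) auto
      obtain Q' where Q': "Q' = (2::nat) ^ s'" by simp
      have "Q' \<ge> 1" using Q' by simp
      have QQ: "Q = 2 * Q'" using Q Q' s' by simp
      have "m - 1 = 2 ^ Suc s' - 2" using QQ Q' unfolding m_def by simp
      moreover have "m - 1 < n" using nm m1 by simp
      ultimately show "\<not> BadN (m - 1)" using less.IH by blast
      have "(m - 1) div 2 = 2 ^ s' - 1" using QQ Q' \<open>Q' \<ge> 1\<close> unfolding m_def by auto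
      then show "\<not> Has2N ((m - 1) div 2)" using T1 by simp
    qed
  next
    assume nB: "n = 2 ^ t"
    define m where "m = Q"
    have nm: "n = 2 * m" using nB s Q unfolding m_def by simp
    show ?thesis unfolding nm
    proof (rule T4)
      show "\<not> BadN m"
      proof (cases s)
        case 0 then have "m = 2 ^ 1 - 1" using Q unfolding m_def by simp
        then show ?thesis using nb0 by blast
      next
        case (Suc s')
        then have "m = 2 ^ Suc s'" using Q unfolding m_def by simp
        moreover have "m < n" using nm Q1 unfolding m_def by simp
        ultimately show ?thesis using less.IH by blast
      qed
    next
      show "\<not> BadN (m - 1)" unfolding m_def Q using nb0 by blast
    next
      have "(m - 1) div 2 = 2 ^ (s - 1) - 1"
      proof (cases s)
        case 0 then show ?thesis using Q unfolding m_def by simp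
      next
        case (Suc s')
        then have "Q = 2 * 2 ^ s'" using Q by simp
        moreover have "(2::nat) ^ s' \<ge> 1" by simp
        ultimately show ?thesis unfolding m_def using Suc by auto
      qed
      then show "\<not> Has2N ((m - 1) div 2)" using T1 by simp
    qed
  qed
qed

theorem mainTheorem2:
  fixes n :: nat
  assumes "even n"
  shows "v n = 0 \<longleftrightarrow> (\<exists>t::nat. t > 0 \<and> (n = 2 ^ t - 2 \<or> n = 2 ^ t))"
  using v_zero_iff NT1[OF assms] NT2 by blast

end
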